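(* Let $\mathcal{P}$ and $\mathcal{N}$ be disjoint finite index sets (positives and negatives) with $|\mathcal{P}|\ge 1$. Let $(s_i)_{i\in\mathcal{P}\cup\mathcal{N}}$ be real logits, pairwise distinct, and for each $i\in\mathcal{P}$ let $\mathrm{IoU}_i\in[0,1]$. Take the smoothing parameter $\delta=0$, i.e. $H(x)=1$ for $x>0$ and $H(x)=0$ for $x<0$. Then, for every index $i\in\mathcal{P}\cup\mathcal{N}$, the Bucketed AP Loss gradient equals the AP Loss gradient, $\frac{\partial\mathcal{L}_{BAP}}{\partial s_i}=\frac{\partial\mathcal{L}_{AP}}{\partial s_i}$, and the Bucketed RS Loss gradient equals the RS Loss gradient, $\frac{\partial\mathcal{L}_{BRS}}{\partial s_i}=\frac{\partial\mathcal{L}_{RS}}{\partial s_i}$, where all four quantities are defined as in the context.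
   Context: Notation. $x_{ij}=s_j-s_i$. For $i\in\mathcal{P}$: $N_{FP}(i)=\sum_{j\in\mathcal{N}}H(x_{ij})$, $\mathrm{rank}(i)=1+\sum_{j\in\mathcal{P}\cup\mathcal{N},\,j\ne i}H(x_{ij})$, $\mathrm{rank}^+(i)=1+\sum_{j\in\mathcal{P},\,j\neq i}H(x_{ij})$ (the self-term counts as $1$). Convention: a ratio with zero denominator is $0$. Ranking error $\ell_R(i)=N_{FP}(i)/\mathrm{rank}(i)$, ranking pmf $p_R(j|i)=H(x_{ij})/N_{FP}(i)$ for $j\in\mathcal{N}$. Sorting error $\ell_S(i)=\frac{1}{\mathrm{rank}^+(i)}\sum_{j\in\mathcal{P}}H(x_{ij})(1-\mathrm{IoU}_j)$; target sorting error $\ell^*_S(i)=\frac{\sum_{j\in\mathcal{P}}H(x_{ij})[\mathrm{IoU}_j\ge \mathrm{IoU}_i](1-\mathrm{IoU}_j)}{\sum_{j\in\mathcal{P}}H(x_{ij})[\mathrm{IoU}_j\ge\mathrm{IoU}_i]}$; sorting pmf $p_S(j|i)=\frac{H(x_{ij})[\mathrm{IoU}_j<\mathrm{IoU}_i]}{\sum_{k\in\mathcal{P}}H(x_{ik})[\mathrm{IoU}_k<\mathrm{IoU}_i]}$ for $j\in\mathcal{P}$ ($[\cdot]$ is the Iverson bracket; in these $\mathcal{P}$-sums the term $j=i$ uses $H(x_{ii}):=1$). AP Loss gradients (identity update): for $i\in\mathcal{P}$, $\frac{\partial\mathcal{L}_{AP}}{\partial s_i}=-\frac{1}{|\mathcal{P}|}\ell_R(i)$;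 for $i\in\mathcal{N}$, $\frac{\partial\mathcal{L}_{AP}}{\partial s_i}=\frac{1}{|\mathcal{P}|}\sum_{j\in\mathcal{P}}\ell_R(j)p_R(i|j)$. RS Loss gradients: for $i\in\mathcal{N}$ they equal the AP Loss gradients; for $i\in\mathcal{P}$, $\frac{\partial\mathcal{L}_{RS}}{\partial s_i}=\frac{1}{|\mathcal{P}|}\big(-\ell_R(i)+\ell^*_S(i)-\ell_S(i)+\sum_{j\in\mathcal{P}}(\ell_S(j)-\ell^*_S(j))p_S(i|j)\big)$. Buckets. Sort all logits decreasingly; the positives appear as $\hat s^+_1>\dots>\hat s^+_{|\mathcal{P}|}$. Bucket $B_1$ is the set of negatives with logit $>\hat s^+_1$, $B_k$ ($2\le k\le|\mathcal{P}|$) the negatives with logit in $(\hat s^+_k,\hat s^+_{k-1})$, $B_{|\mathcal{P}|+1}$ the negatives with logit $<\hat s^+_{|\mathcal{P}|}$; $b_k=|B_k|$. For nonempty $B_k$, the prototype logit $s^b_k$ is the mean of the logits in $B_k$, and $x^b_{ik}=s^b_k-s_i$. For $i\in\mathcal{P}$: $N^b_{FP}(i)=\sum_{k:b_k>0}H(x^b_{ik})b_k$, bucketed ranking error $\ell^b_R(i)=\frac{N^b_{FP}(i)}{\sum_{j\in\mathcal{P}}H(x_{ij})+N^b_{FP}(i)}$ (with $H(x_{ii}):=1$), and bucket pmf $p(k^b|i)=\frac{b_kH(x^b_{ik})}{N^b_{FP}(i)}$. Bucketed AP Loss gradients: for $i\in\mathcal{P}$, $\frac{\partial\mathcal{L}_{BAP}}{\partial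 s_i}=-\frac{1}{|\mathcal{P}|}\ell^b_R(i)$; for a negative $i\in B_k$, $\frac{\partial\mathcal{L}_{BAP}}{\partial s_i}=\frac{1}{|\mathcal{P}|}\sum_{j\in\mathcal{P}}\ell^b_R(j)\,p(k^b|j)\,\frac{1}{b_k}$. Bucketed RS Loss gradients: for negatives equal to the Bucketed AP gradients; for $i\in\mathcal{P}$, $\frac{\partial\mathcal{L}_{BRS}}{\partial s_i}=\frac{1}{|\mathcal{P}|}\big(-\ell^b_R(i)+\ell^*_S(i)-\ell_S(i)+\sum_{j\in\mathcal{P}}(\ell_S(j)-\ell^*_S(j))p_S(i|j)\big)$. *)

theory Defs
  imports Complex_Main
begin

text \<open>H x = 1 for x > 0 and 0 for x < 0; the value at 0 is irrelevant under the
  distinctness hypothesis (we set it to 0).\<close>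
definition H :: "real \<Rightarrow> real" where
  "H x = (if x > 0 then 1 else 0)"

text \<open>x_ij = s_j - s_i, with the convention H(x_ii) := 1 used in the P-sums.\<close>
definition Hs :: "('a \<Rightarrow> real) \<Rightarrow> 'a \<Rightarrow> 'a \<Rightarrow> real" where
  "Hs s i j = (if j = i then 1 else H (s j - s i))"

definition NFP :: "'a set \<Rightarrow> ('a \<Rightarrow> real) \<Rightarrow> 'a \<Rightarrow> real" where
  "NFP N s i = (\<Sum>j\<in>N. H (s j - s i))"

definition rnk :: "'a set \<Rightarrow> 'a set \<Rightarrow> ('a \<Rightarrow> real) \<Rightarrow> 'a \<Rightarrow> real" where
  "rnk P N s i = 1 + (\<Sum>j\<in>(P \<union> N) - {i}. H (s j - s i))"

definition rnkp :: "'a set \<Rightarrow> ('a \<Rightarrow> real) \<Rightarrow> 'a \<Rightarrow> real" where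
  "rnkp P s i = 1 + (\<Sum>j\<in>P - {i}. H (s j - s i))"

text \<open>Division by zero yields 0 in Isabelle, matching the paper's convention.\<close>
definition lR :: "'a set \<Rightarrow> 'a set \<Rightarrow> ('a \<Rightarrow> real) \<Rightarrow> 'a \<Rightarrow> real" where
  "lR P N s i = NFP N s i / rnk P N s i"

definition pR :: "'a set \<Rightarrow> ('a \<Rightarrow> real) \<Rightarrow> 'a \<Rightarrow> 'a \<Rightarrow> real" where
  "pR N s j i = H (s j - s i) / NFP N s i"

definition lS :: "'a set \<Rightarrow> ('a \<Rightarrow> real) \<Rightarrow> ('a \<Rightarrow> real) \<Rightarrow> 'a \<Rightarrow> real" where
  "lS P s iou i = (1 / rnkp P s i) * (\<Sum>j\<in>P. Hs s i j * (1 - iou j))"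

definition lSstar :: "'a set \<Rightarrow> ('a \<Rightarrow> real) \<Rightarrow> ('a \<Rightarrow> real) \<Rightarrow> 'a \<Rightarrow> real" where
  "lSstar P s iou i =
     (\<Sum>j\<in>P. Hs s i j * (if iou j \<ge> iou i then 1 else 0) * (1 - iou j)) /
     (\<Sum>j\<in>P. Hs s i j * (if iou j \<ge> iou i then 1 else 0))"

definition pS :: "'a set \<Rightarrow> ('a \<Rightarrow> real) \<Rightarrow> ('a \<Rightarrow> real) \<Rightarrow> 'a \<Rightarrow> 'a \<Rightarrow> real" where
  "pS P s iou j i =
     (Hs s i j * (if iou j < iou i then 1 else 0)) /
     (\<Sum>k\<in>P. Hs s i k * (if iou k < iou i then 1 else 0))"

definition gradAP :: "'a set \<Rightarrow> 'a set \<Rightarrow> ('a \<Rightarrow> real) \<Rightarrow> 'a \<Rightarrow> real" where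
  "gradAP P N s i =
     (if i \<in> P then - (1 / real (card P)) * lR P N s i
      else (1 / real (card P)) * (\<Sum>j\<in>P. lR P N s j * pR N s i j))"

definition sortgrad :: "'a set \<Rightarrow> ('a \<Rightarrow> real) \<Rightarrow> ('a \<Rightarrow> real) \<Rightarrow> 'a \<Rightarrow> real" where
  "sortgrad P s iou i = lSstar P s iou i - lS P s iou i +
     (\<Sum>j\<in>P. (lS P s iou j - lSstar P s iou j) * pS P s iou i j)"

definition gradRS :: "'a set \<Rightarrow> 'a set \<Rightarrow> ('a \<Rightarrow> real) \<Rightarrow> ('a \<Rightarrow> real) \<Rightarrow> 'a \<Rightarrow> real" where
  "gradRS P N s iou i =
     (if i \<in> P then (1 / real (card P)) * (- lR P N s i + sortgrad P s iou i)
      else gradAP P N s i)"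

text \<open>shat k = k-th largest positive logit (k = 1 .. |P|).\<close>
definition shat :: "'a set \<Rightarrow> ('a \<Rightarrow> real) \<Rightarrow> nat \<Rightarrow> real" where
  "shat P s k = rev (sorted_list_of_set (s ` P)) ! (k - 1)"

definition bucket :: "'a set \<Rightarrow> 'a set \<Rightarrow> ('a \<Rightarrow> real) \<Rightarrow> nat \<Rightarrow> 'a set" where
  "bucket P N s k =
     (if k = 1 then {n\<in>N. s n > shat P s 1}
      else if k = card P + 1 then {n\<in>N. s n < shat P s (card P)}
      else {n\<in>N. shat P s k < s n \<and> s n < shat P s (k - 1)})"

definition bsz :: "'a set \<Rightarrow> 'a set \<Rightarrow> ('a \<Rightarrow> real) \<Rightarrow> nat \<Rightarrow> real" where
  "bsz P N s k = real (card (bucket P N s k))"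

definition proto :: "'a set \<Rightarrow> 'a set \<Rightarrow> ('a \<Rightarrow> real) \<Rightarrow> nat \<Rightarrow> real" where
  "proto P N s k = (\<Sum>n\<in>bucket P N s k. s n) / bsz P N s k"

definition NbFP :: "'a set \<Rightarrow> 'a set \<Rightarrow> ('a \<Rightarrow> real) \<Rightarrow> 'a \<Rightarrow> real" where
  "NbFP P N s i = (\<Sum>k\<in>{k\<in>{1..card P + 1}. bsz P N s k > 0}.
                     H (proto P N s k - s i) * bsz P N s k)"

definition lbR :: "'a set \<Rightarrow> 'a set \<Rightarrow> ('a \<Rightarrow> real) \<Rightarrow> 'a \<Rightarrow> real" where
  "lbR P N s i = NbFP P N s i / ((\<Sum>j\<in>P. Hs s i j) + NbFP P N s i)"

definition pb :: "'a set \<Rightarrow> 'a set \<Rightarrow> ('a \<Rightarrow> real) \<Rightarrow> nat \<Rightarrow> 'a \<Rightarrow> real" where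
  "pb P N s k i = bsz P N s k * H (proto P N s k - s i) / NbFP P N s i"

definition bidx :: "'a set \<Rightarrow> 'a set \<Rightarrow> ('a \<Rightarrow> real) \<Rightarrow> 'a \<Rightarrow> nat" where
  "bidx P N s i = (THE k. k \<in> {1..card P + 1} \<and> i \<in> bucket P N s k)"

definition gradBAP :: "'a set \<Rightarrow> 'a set \<Rightarrow> ('a \<Rightarrow> real) \<Rightarrow> 'a \<Rightarrow> real" where
  "gradBAP P N s i =
     (if i \<in> P then - (1 / real (card P)) * lbR P N s i
      else (1 / real (card P)) *
        (\<Sum>j\<in>P. lbR P N s j * pb P N s (bidx P N s i) j * (1 / bsz P N s (bidx P N s i))))"

definition gradBRS :: "'a set \<Rightarrow> 'a set \<Rightarrow> ('a \<Rightarrow> real) \<Rightarrow> ('a \<Rightarrow> real) \<Rightarrow> 'a \<Rightarrow> real" where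
  "gradBRS P N s iou i =
     (if i \<in> P then (1 / real (card P)) * (- lbR P N s i + sortgrad P s iou i)
      else gradBAP P N s i)"

end

theory Submission
  imports Defs
begin

context
  fixes P N :: "'a set" and s :: "'a \<Rightarrow> real"
  assumes fP: "finite P" and fN: "finite N" and dj: "P \<inter> N = {}" and cP: "card P \<ge> 1"
    and inj: "inj_on s (P \<union> N)"
begin

lemma cardSP: "card (s ` P) = card P"
  using inj by (intro card_image) (auto intro: inj_on_subset)

lemma shat_mono:
  assumes "1 \<le> a" "a < b" "b \<le> card P"
  shows "shat P s b < shat P s a"
proof -
  define xs where "xs = sorted_list_of_set (s ` P)"
  have len: "length xs = card P" using cardSP by (simp add: xs_def)
  have sw: "sorted_wrt (<) xs" by (simp add: xs_def)
  have "shat P s b = xs ! (card P - b)"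
    using assms len by (simp add: shat_def xs_def[symmetric] rev_nth Suc_diff_Suc)
  moreover have "shat P s a = xs ! (card P - a)"
    using assms len by (simp add: shat_def xs_def[symmetric] rev_nth Suc_diff_Suc)
  moreover have "xs ! (card P - b) < xs ! (card P - a)"
    using sw assms len by (intro sorted_wrt_nth_less[where P="(<)"]) auto
  ultimately show ?thesis by simp
qed

lemma shat_mono_le:
  assumes "1 \<le> a" "a \<le> b" "b \<le> card P"
  shows "shat P s b \<le> shat P s a"
  using shat_mono[of a b] assms by (cases "a = b") auto

lemma shat_in:
  assumes "1 \<le> t" "t \<le> card P"
  shows "shat P s t \<in> s ` P"
proof -
  define xs where "xs = sorted_list_of_set (s ` P)"
  have len: "length xs = card P" using cardSP by (simp add: xs_def)
  have "shat P s t = rev xs ! (t - 1)" by (simp add: shat_def xs_def)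
  also have "\<dots> \<in> set (rev xs)" using assms len by (intro nth_mem) auto
  also have "\<dots> = s ` P" using fP by (simp add: xs_def)
  finally show ?thesis .
qed

lemma shat_surj:
  assumes "j \<in> P"
  shows "\<exists>t. 1 \<le> t \<and> t \<le> card P \<and> shat P s t = s j"
proof -
  define xs where "xs = sorted_list_of_set (s ` P)"
  have len: "length (rev xs) = card P" using cardSP by (simp add: xs_def)
  have "s j \<in> set (rev xs)" using fP assms by (simp add: xs_def)
  then obtain u where u: "u < length (rev xs)" "rev xs ! u = s j"
    by (metis in_set_conv_nth)
  show ?thesis
    by (rule exI[of _ "Suc u"]) (use u len in \<open>auto simp: shat_def xs_def\<close>)
qed

lemma neg_ne_shat:
  assumes "n \<in> N" "1 \<le> t" "t \<le> card P"
  shows "s n \<noteq> shat P s t"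
proof
  assume "s n = shat P s t"
  then obtain j where "j \<in> P" "s n = s j" using shat_in[OF assms(2,3)] by auto
  then have "n = j" using inj assms(1) by (auto dest: inj_onD)
  with \<open>j \<in> P\<close> assms(1) dj show False by auto
qed

lemma bucket_sub: "bucket P N s k \<subseteq> N"
  by (auto simp: bucket_def)

lemma bucket_lo:
  assumes "n \<in> bucket P N s k" "1 \<le> k" "k \<le> card P"
  shows "shat P s k < s n"
  using assms by (auto simp: bucket_def split: if_splits)

lemma bucket_hi:
  assumes "n \<in> bucket P N s k" "2 \<le> k" "k \<le> card P + 1"
  shows "s n < shat P s (k - 1)"
  using assms by (auto simp: bucket_def split: if_splits)

lemma bucket_disj:
  assumes "k < k'" "1 \<le> k" "k' \<le> card P + 1"
  shows "bucket P N s k \<inter> bucket P N s k' = {}"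
proof (rule ccontr)
  assume "bucket P N s k \<inter> bucket P N s k' \<noteq> {}"
  then obtain n where n: "n \<in> bucket P N s k" "n \<in> bucket P N s k'" by auto
  have "shat P s k < s n" using bucket_lo[OF n(1)] assms by auto
  moreover have "s n < shat P s (k' - 1)" using bucket_hi[OF n(2)] assms by auto
  moreover have "shat P s (k' - 1) \<le> shat P s k" using shat_mono_le[of k "k' - 1"] assms by auto
  ultimately show False by auto
qed

lemma bucket_cover:
  assumes "n \<in> N"
  shows "\<exists>k. 1 \<le> k \<and> k \<le> card P + 1 \<and> n \<in> bucket P N s k"
proof (cases "s n > shat P s 1")
  case True
  then show ?thesis using assms by (intro exI[of _ 1]) (auto simp: bucket_def)
next
  case False
  then have lt1: "s n < shat P s 1" using neg_ne_shat[OF assms, of 1] cP by auto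
  show ?thesis
  proof (cases "s n < shat P s (card P)")
    case True
    then show ?thesis using assms cP by (intro exI[of _ "card P + 1"]) (auto simp: bucket_def)
  next
    case False
    then have gtm: "shat P s (card P) < s n" using neg_ne_shat[OF assms, of "card P"] cP by auto
    define t where "t = (LEAST t. 1 \<le> t \<and> t \<le> card P \<and> shat P s t < s n)"
    have ex: "1 \<le> card P \<and> card P \<le> card P \<and> shat P s (card P) < s n" using cP gtm by auto
    have t: "1 \<le> t \<and> t \<le> card P \<and> shat P s t < s n"
      unfolding t_def by (rule LeastI[of _ "card P"]) (rule ex)
    have t2: "t \<ge> 2" using t lt1 by (cases "t = 1") auto
    have "\<not> (1 \<le> t - 1 \<and> t - 1 \<le> card P \<and> shat P s (t - 1) < s n)"
    proof
      assume "1 \<le> t - 1 \<and> t - 1 \<le> card P \<and> shat P s (t - 1) < s n"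
      then have "t \<le> t - 1" unfolding t_def by (rule Least_le)
      with t2 show False by simp
    qed
    moreover have "1 \<le> t - 1" "t - 1 \<le> card P" using t t2 by auto
    moreover have "s n \<noteq> shat P s (t - 1)" using neg_ne_shat[OF assms calculation(2,3)] .
    ultimately have "s n < shat P s (t - 1)" by auto
    then show ?thesis using t t2 assms by (intro exI[of _ t]) (auto simp: bucket_def)
  qed
qed

lemma same_side:
  assumes "n \<in> bucket P N s k" "n' \<in> bucket P N s k" "1 \<le> k" "k \<le> card P + 1"
    and "j \<in> P" "s n > s j"
  shows "s n' > s j"
proof -
  obtain t where t: "1 \<le> t" "t \<le> card P" "shat P s t = s j" using shat_surj[OF assms(5)] by auto
  show ?thesis
  proof (cases "k = 1")
    case True
    then have "shat P s 1 < s n'" using bucket_lo[OF assms(2)] cP by auto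
    moreover have "shat P s t \<le> shat P s 1" using shat_mono_le[of 1 t] t by auto
    ultimately show ?thesis using t by auto
  next
    case False
    then have "s n < shat P s (k - 1)" using bucket_hi[OF assms(1)] assms by auto
    then have "shat P s t < shat P s (k - 1)" using t assms by auto
    have km: "k - 1 \<le> card P" using assms by simp
    have tk: "k - 1 < t"
    proof (rule ccontr)
      assume "\<not> k - 1 < t"
      then have "shat P s (k - 1) \<le> shat P s t" using shat_mono_le[of t "k - 1"] t km by auto
      with \<open>shat P s t < shat P s (k - 1)\<close> show False by simp
    qed
    then have "k \<le> card P" using t by auto
    then have "shat P s k < s n'" using bucket_lo[OF assms(2)] assms by auto
    moreover have "shat P s t \<le> shat P s k" using shat_mono_le[of k t] t tk assms by auto
    ultimately show ?thesis using t by auto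
  qed
qed

lemma H_side:
  assumes "n \<in> bucket P N s k" "n' \<in> bucket P N s k" "1 \<le> k" "k \<le> card P + 1" "j \<in> P"
  shows "H (s n' - s j) = H (s n - s j)"
  using same_side[OF assms(1,2,3,4,5)] same_side[OF assms(2,1,3,4,5)]
  by (auto simp: H_def)

lemma proto_side:
  assumes "n \<in> bucket P N s k" "1 \<le> k" "k \<le> card P + 1" "j \<in> P"
  shows "H (proto P N s k - s j) = H (s n - s j)"
proof -
  let ?B = "bucket P N s k"
  have fB: "finite ?B" using bucket_sub fN by (rule finite_subset)
  have ne: "?B \<noteq> {}" using assms by auto
  have cpos: "bsz P N s k > 0" using fB ne by (simp add: bsz_def card_gt_0_iff)
  have jn: "\<And>n'. n' \<in> ?B \<Longrightarrow> s n' \<noteq> s j"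
  proof
    fix n' assume "n' \<in> ?B" "s n' = s j"
    then have "n' \<in> N" using bucket_sub by auto
    with \<open>s n' = s j\<close> have "n' = j" using inj assms(4) by (auto dest: inj_onD)
    with \<open>n' \<in> N\<close> assms(4) dj show False by auto
  qed
  show ?thesis
  proof (cases "s n > s j")
    case True
    then have all: "\<And>n'. n' \<in> ?B \<Longrightarrow> s n' > s j" using same_side assms by blast
    have "(\<Sum>n'\<in>?B. s j) < (\<Sum>n'\<in>?B. s n')" using fB ne all by (intro sum_strict_mono) auto
    then have "bsz P N s k * s j < (\<Sum>n'\<in>?B. s n')" by (simp add: bsz_def)
    then have "proto P N s k > s j" using cpos by (simp add: proto_def field_simps)
    then show ?thesis using True by (simp add: H_def)
  next
    case False
    then have "s n < s j" using jn assms(1) by force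
    have all: "\<And>n'. n' \<in> ?B \<Longrightarrow> s n' < s j"
    proof -
      fix n' assume n': "n' \<in> ?B"
      have "\<not> s n' > s j" using same_side[OF n' assms(1) assms(2,3,4)] False by auto
      then show "s n' < s j" using jn n' by force
    qed
    have "(\<Sum>n'\<in>?B. s n') < (\<Sum>n'\<in>?B. s j)" using fB ne all by (intro sum_strict_mono) auto
    then have "(\<Sum>n'\<in>?B. s n') < bsz P N s k * s j" by (simp add: bsz_def)
    then have "proto P N s k < s j" using cpos by (simp add: proto_def field_simps)
    then show ?thesis using False by (simp add: H_def)
  qed
qed

lemma NbFP_eq:
  assumes "j \<in> P"
  shows "NbFP P N s j = NFP N s j"
proof -
  let ?K = "{1..card P + 1}"
  have "NbFP P N s j = (\<Sum>k\<in>?K. H (proto P N s k - s j) * bsz P N s k)"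
    unfolding NbFP_def by (rule sum.mono_neutral_left) (auto simp: bsz_def)
  also have "\<dots> = (\<Sum>k\<in>?K. \<Sum>n\<in>bucket P N s k. H (s n - s j))"
  proof (rule sum.cong[OF refl])
    fix k assume k: "k \<in> ?K"
    show "H (proto P N s k - s j) * bsz P N s k = (\<Sum>n\<in>bucket P N s k. H (s n - s j))"
    proof (cases "bucket P N s k = {}")
      case True then show ?thesis by (simp add: bsz_def)
    next
      case False
      then obtain n where n: "n \<in> bucket P N s k" by auto
      have "(\<Sum>n'\<in>bucket P N s k. H (s n' - s j)) = (\<Sum>n'\<in>bucket P N s k. H (s n - s j))"
        using H_side[OF n _ _ _ assms] k by (intro sum.cong) auto
      then show ?thesis using proto_side[OF n _ _ assms] k by (simp add: bsz_def)
    qed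
  qed
  also have "\<dots> = (\<Sum>n\<in>(\<Union>k\<in>?K. bucket P N s k). H (s n - s j))"
  proof (rule sum.UNION_disjoint[symmetric])
    show "finite ?K" by simp
    show "\<forall>k\<in>?K. finite (bucket P N s k)" using bucket_sub fN by (blast intro: finite_subset)
    show "\<forall>k\<in>?K. \<forall>k'\<in>?K. k \<noteq> k' \<longrightarrow> bucket P N s k \<inter> bucket P N s k' = {}"
    proof (intro ballI impI)
      fix k k' assume "k \<in> ?K" "k' \<in> ?K" "k \<noteq> k'"
      then show "bucket P N s k \<inter> bucket P N s k' = {}"
        using bucket_disj[of k k'] bucket_disj[of k' k] by (cases "k < k'") auto
    qed
  qed
  also have "(\<Union>k\<in>?K. bucket P N s k) = N"
    using bucket_sub bucket_cover by fastforce
  finally show ?thesis by (simp add: NFP_def)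
qed

lemma lbR_eq:
  assumes "j \<in> P"
  shows "lbR P N s j = lR P N s j"
proof -
  have jN: "j \<notin> N" using assms dj by auto
  have hs: "(\<Sum>i\<in>P. Hs s j i) = 1 + (\<Sum>i\<in>P - {j}. H (s i - s j))"
    using fP assms by (simp add: Hs_def sum.remove)
  have "(P \<union> N) - {j} = (P - {j}) \<union> N" using jN by auto
  then have "rnk P N s j = 1 + (\<Sum>i\<in>P - {j}. H (s i - s j)) + NFP N s j"
    using fP fN dj by (simp add: rnk_def NFP_def sum.union_disjoint Int_Diff Diff_Int_distrib2)
  then show ?thesis using hs NbFP_eq[OF assms] by (simp add: lbR_def lR_def add.assoc)
qed

lemma bidx_prop:
  assumes "n \<in> N"
  shows "1 \<le> bidx P N s n \<and> bidx P N s n \<le> card P + 1 \<and> n \<in> bucket P N s (bidx P N s n)"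
proof -
  obtain k where k: "1 \<le> k" "k \<le> card P + 1" "n \<in> bucket P N s k" using bucket_cover[OF assms] by auto
  have "bidx P N s n = k" unfolding bidx_def
  proof (rule the_equality)
    show "k \<in> {1..card P + 1} \<and> n \<in> bucket P N s k" using k by auto
    fix k' assume k': "k' \<in> {1..card P + 1} \<and> n \<in> bucket P N s k'"
    show "k' = k"
      using bucket_disj[of k k'] bucket_disj[of k' k] k k' by (cases "k < k'"; cases "k' < k") auto
  qed
  then show ?thesis using k by auto
qed

lemma grad_neg:
  assumes "n \<in> N"
  shows "gradBAP P N s n = gradAP P N s n"
proof -
  have nP: "n \<notin> P" using assms dj by auto
  define k where "k = bidx P N s n"
  have k: "1 \<le> k" "k \<le> card P + 1" "n \<in> bucket P N s k" using bidx_prop[OF assms] by (auto simp: k_def)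
  have fB: "finite (bucket P N s k)" using bucket_sub fN by (rule finite_subset)
  have cpos: "bsz P N s k > 0" using fB k by (auto simp: bsz_def card_gt_0_iff)
  have "lbR P N s j * pb P N s k j * (1 / bsz P N s k) = lR P N s j * pR N s n j" if j: "j \<in> P" for j
    using lbR_eq[OF j] NbFP_eq[OF j] proto_side[OF k(3) k(1) k(2) j] cpos
    by (simp add: pb_def pR_def)
  then show ?thesis using nP by (simp add: gradBAP_def gradAP_def k_def[symmetric])
qed

end

theorem theorem1:
  fixes P N :: "'a set" and s iou :: "'a \<Rightarrow> real"
  assumes "finite P" and "finite N" and "P \<inter> N = {}" and "card P \<ge> 1"
    and "inj_on s (P \<union> N)"
    and "\<forall>i\<in>P. 0 \<le> iou i \<and> iou i \<le> 1"
  shows "\<forall>i\<in>P \<union> N. gradBAP P N s i = gradAP P N s i \<and>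
                       gradBRS P N s iou i = gradRS P N s iou i"
proof
  fix i assume i: "i \<in> P \<union> N"
  show "gradBAP P N s i = gradAP P N s i \<and> gradBRS P N s iou i = gradRS P N s iou i"
  proof (cases "i \<in> P")
    case True
    then show ?thesis using lbR_eq[OF assms(1-5) True]
      by (simp add: gradBAP_def gradAP_def gradBRS_def gradRS_def)
  next
    case False
    then have "i \<in> N" using i by auto
    then show ?thesis using grad_neg[OF assms(1-5)] False
      by (simp add: gradBRS_def gradRS_def)
  qed
qed

end
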